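(* Let $p\ge5$ be prime, $a\in\mathbb{C}_p$, $a\ne0$, $A=|a|_p$, $f(x)=\frac{ax}{x^2+a}$, and $t_1=\sqrt{-2a}$, $t_2=-\sqrt{-2a}$. Then for every $0<r<\sqrt A$, $$f(S_r(t_1)\setminus\mathcal P_2)\subseteq S_r(t_2),\qquad f(S_r(t_2)\setminus\mathcal P_2)\subseteq S_r(t_1).$$
   Context: $S_r(t)=\{x\in\mathbb{C}_p:|x-t|_p=r\}$. $\mathcal P_2=\{x\in\mathbb{C}_p:\exists n\in\mathbb{N},\ f^n(x)\in\{\pm\sqrt{-a},\ \pm\sqrt{(-3\pm\sqrt5)a/2}\}\}$. The points $t_1,t_2$ form a $2$-cycle of $f$. *)

theory Defs
  imports Complex_Main "HOL-Computational_Algebra.Polynomial" "HOL-Computational_Algebra.Factorial_Ring"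
begin

text \<open>C_p is characterised up to isometric isomorphism: a field of characteristic 0
with an absolute value that is non-archimedean, restricts to the p-adic absolute value
on the integers (hence on Q), is complete, algebraically closed, and in which the
algebraic numbers (algebraic closure of Q) are dense.\<close>

definition is_Cp :: "nat \<Rightarrow> ('a::field_char_0 \<Rightarrow> real) \<Rightarrow> bool" where
  "is_Cp p absv \<longleftrightarrow>
     (\<forall>x. absv x \<ge> 0) \<and>
     (\<forall>x. absv x = 0 \<longleftrightarrow> x = 0) \<and>
     (\<forall>x y. absv (x * y) = absv x * absv y) \<and>
     (\<forall>x y. absv (x + y) \<le> max (absv x) (absv y)) \<and>
     (\<forall>n::int. n \<noteq> 0 \<longrightarrow> absv (of_int n) = real p powr (- real (multiplicity (int p) n))) \<and>
     (\<forall>X::nat \<Rightarrow> 'a. (\<forall>e>0. \<exists>N. \<forall>m\<ge>N. \<forall>n\<ge>N. absv (X m - X n) < e) \<longrightarrow>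
         (\<exists>L. \<forall>e>0. \<exists>N. \<forall>n\<ge>N. absv (X n - L) < e)) \<and>
     (\<forall>q::'a poly. degree q > 0 \<longrightarrow> (\<exists>z. poly q z = 0)) \<and>
     (\<forall>x. \<forall>e>0. \<exists>y. absv (x - y) < e \<and>
         (\<exists>q::int poly. q \<noteq> 0 \<and> poly (map_poly of_int q) y = 0))"

definition sphere_p :: "('a::field_char_0 \<Rightarrow> real) \<Rightarrow> 'a \<Rightarrow> real \<Rightarrow> 'a set" where
  "sphere_p absv t r = {x. absv (x - t) = r}"

definition fmap :: "'a::field_char_0 \<Rightarrow> 'a \<Rightarrow> 'a" where
  "fmap a x = a * x / (x^2 + a)"

definition targets2 :: "'a::field_char_0 \<Rightarrow> 'a set" where
  "targets2 a = {z. z^2 = - a \<or> (\<exists>s. s^2 = 5 \<and> z^2 = (-3 + s) * a / 2)}"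

definition P2 :: "'a::field_char_0 \<Rightarrow> 'a set" where
  "P2 a = {x. \<exists>n::nat. (fmap a ^^ n) x \<in> targets2 a}"

end

theory Submission
  imports Defs
begin

lemma key:
  fixes absv :: "'a::field_char_0 \<Rightarrow> real" and a t h :: 'a
  assumes nn: "\<forall>x. absv x \<ge> 0"
    and z: "\<forall>x. absv x = 0 \<longleftrightarrow> x = 0"
    and mul: "\<forall>x y. absv (x * y) = absv x * absv y"
    and um: "\<forall>x y. absv (x + y) \<le> max (absv x) (absv y)"
    and a2: "absv 2 = 1" and a3: "absv 3 = 1" and m1: "absv (-1) = 1"
    and a0: "a \<noteq> 0" and tt: "t^2 = -2 * a"
    and hr: "absv h = r" and r0: "0 < r" and rA: "r < sqrt (absv a)"
  shows "absv (fmap a (t + h) - (- t)) = r"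
proof -
  have neg: "absv (- x) = absv x" for x
    using mul[rule_format, of "-1" x] m1 by simp
  have strict: "absv (x + y) = absv x" if "absv y < absv x" for x y
  proof -
    have "absv (x + y) \<le> absv x" using um[rule_format, of x y] that by simp
    moreover have "absv x \<le> max (absv (x+y)) (absv (-y))"
      using um[rule_format, of "x+y" "-y"] by simp
    ultimately show ?thesis using that neg[of y] by (auto simp: max_def split: if_splits)
  qed
  define A where "A = absv a"
  have A0: "A > 0" using a0 z nn unfolding A_def by (metis less_eq_real_def)
  have "absv t * absv t = A"
  proof -
    have "absv t * absv t = absv (t*t)" using mul by simp
    also have "t*t = - (2*a)" using tt by (simp add: power2_eq_square)
    also have "absv (- (2*a)) = A" using neg mul a2 unfolding A_def by simp
    finally show ?thesis .
  qed
  hence tA: "absv t = sqrt A" using nn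
    by (metis real_sqrt_abs2 abs_of_nonneg power2_eq_square)
  have rt: "r * absv t < A" using rA r0 tA A0 unfolding A_def[symmetric]
  proof -
    have "r * sqrt A < sqrt A * sqrt A" using rA A0 unfolding A_def[symmetric]
      by (intro mult_strict_right_mono) auto
    thus ?thesis using tA A0 by simp
  qed
  have rr: "r * r < A" using rA r0 A0 unfolding A_def[symmetric]
  proof -
    have "r * r < sqrt A * sqrt A" using rA r0 A0 unfolding A_def[symmetric]
      by (intro mult_strict_mono) auto
    thus ?thesis using A0 by simp
  qed
  have num: "absv (t*h - 3*a) = A"
  proof -
    have "absv (t*h) < absv (- (3*a))" using mul rt hr neg a3 unfolding A_def
      by (simp add: mult.commute)
    hence "absv (- (3*a) + t*h) = absv (-(3*a))" by (rule strict)
    thus ?thesis using neg mul a3 unfolding A_def by simp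
  qed
  have den: "absv (-a + 2*t*h + h^2) = A"
  proof -
    have "absv (2*t*h + h^2) \<le> max (absv (2*t*h)) (absv (h^2))" using um by blast
    also have "absv (2*t*h) = r * absv t" using mul a2 hr by (simp add: mult.commute)
    also have "absv (h^2) = r * r" using mul hr by (simp add: power2_eq_square)
    finally have "absv (2*t*h + h^2) < absv (-a)" using rt rr neg unfolding A_def by simp
    hence "absv (-a + (2*t*h + h^2)) = absv (-a)" by (rule strict)
    moreover have "-a + 2*t*h + h^2 = -a + (2*t*h + h^2)" by (simp add: algebra_simps)
    ultimately show ?thesis using neg unfolding A_def by metis
  qed
  have dnz: "(t+h)^2 + a \<noteq> 0"
  proof
    assume "(t+h)^2 + a = 0"
    moreover have "(t+h)^2 + a = -a + 2*t*h + h^2" using tt by (simp add: power2_eq_square algebra_simps)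
    ultimately have "-a + 2*t*h + h^2 = 0" by simp
    thus False using den A0 z by (metis less_irrefl)
  qed
  have "fmap a (t + h) - (- t) = h * (t*h - 3*a) / (-a + 2*t*h + h^2)"
  proof -
    have e: "(t+h)^2 + a = -a + 2*t*h + h^2" using tt by (simp add: power2_eq_square algebra_simps)
    have "fmap a (t + h) - (- t) = (a*(t+h) + t*((t+h)^2+a)) / ((t+h)^2 + a)"
      unfolding fmap_def using dnz by (simp add: field_simps)
    also have "a*(t+h) + t*((t+h)^2+a) = h * (t*h - 3*a)"
    proof -
      have "a*(t+h) + t*((t+h)^2+a) = 2*a*t + a*h + t^2*t + 2*t^2*h + t*h^2"
        by (simp add: power2_eq_square algebra_simps)
      also have "\<dots> = h * (t*h - 3*a)" unfolding tt by (simp add: power2_eq_square algebra_simps)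
      finally show ?thesis .
    qed
    finally show ?thesis using e by simp
  qed
  moreover have "absv (x / y) = absv x / absv y" if "y \<noteq> 0" for x y
  proof -
    have "absv (x / y) * absv y = absv x" using mul[rule_format, of "x/y" y] that by simp
    moreover have "absv y \<noteq> 0" using z that by simp
    ultimately show ?thesis by (simp add: field_simps)
  qed
  ultimately show ?thesis using num den hr A0 mul z
    by (metis nonzero_mult_div_cancel_right less_irrefl)
qed

theorem theorem4p4:
  fixes p :: nat and absv :: "'a::field_char_0 \<Rightarrow> real" and a t1 t2 :: 'a and r :: real
  assumes "prime p" and "p \<ge> 5"
    and "is_Cp p absv"
    and "a \<noteq> 0"
    and "t1^2 = -2 * a" and "t2 = - t1"
    and "0 < r" and "r < sqrt (absv a)"
  shows "fmap a ` (sphere_p absv t1 r - P2 a) \<subseteq> sphere_p absv t2 r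
       \<and> fmap a ` (sphere_p absv t2 r - P2 a) \<subseteq> sphere_p absv t1 r"
proof -
  note C = assms(3)[unfolded is_Cp_def]
  have nn: "\<forall>x. absv x \<ge> 0" and z: "\<forall>x. absv x = 0 \<longleftrightarrow> x = 0"
    and mul: "\<forall>x y. absv (x * y) = absv x * absv y"
    and um: "\<forall>x y. absv (x + y) \<le> max (absv x) (absv y)"
    and pa: "\<forall>n::int. n \<noteq> 0 \<longrightarrow> absv (of_int n) = real p powr (- real (multiplicity (int p) n))"
    using C by blast+
  have mz: "multiplicity (int p) n = 0" if "n \<in> {-1, 2, 3::int}" for n
  proof (rule not_dvd_imp_multiplicity_0)
    show "\<not> int p dvd n"
    proof
      assume "int p dvd n"
      hence "int p dvd \<bar>n\<bar>" by simp
      hence "int p \<le> \<bar>n\<bar>" using that by (intro zdvd_imp_le) auto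
      thus False using assms(2) that by auto
    qed
  qed
  have p0: "real p > 0" using assms(2) by simp
  have a2: "absv 2 = 1" using pa[rule_format, of 2] mz[of 2] p0 by simp
  have a3: "absv 3 = 1" using pa[rule_format, of 3] mz[of 3] p0 by simp
  have m1: "absv (-1) = 1" using pa[rule_format, of "-1"] mz[of "-1"] p0 by simp
  have gen: "fmap a ` (sphere_p absv t r - P2 a) \<subseteq> sphere_p absv (-t) r" if tt: "t^2 = -2*a" for t
  proof
    fix y assume "y \<in> fmap a ` (sphere_p absv t r - P2 a)"
    then obtain x where x: "absv (x - t) = r" and y: "y = fmap a x" unfolding sphere_p_def by auto
    have "absv (fmap a (t + (x - t)) - (- t)) = r"
      by (rule key[OF nn z mul um a2 a3 m1 assms(4) tt x assms(7,8)])
    thus "y \<in> sphere_p absv (-t) r" unfolding sphere_p_def y by simp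
  qed
  have t2: "t2^2 = -2*a" using assms(5,6) by simp
  show ?thesis using gen[OF assms(5)] gen[OF t2] assms(6) by simp
qed

end
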